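(* Let $f_1,\ldots,f_N\colon[0,1]\to[0,1]$ be $C^1$-diffeomorphisms onto their images, $\mathcal I_P=\{i\colon f_i\text{ preserves orientation}\}$, $\mathcal I_R=\{i\colon f_i\text{ reverses orientation}\}$. Let $A=(a_{ij})_{i,j=1}^{2N}$ be given by $a_{ij}=1$ if ($i\in\mathcal I_P$ and $j\in\{1,\ldots,N\}$), or ($i\in\mathcal I_R$ and $j\in\{N+1,\ldots,2N\}$), or ($i-N\in\mathcal I_P$ and $j\in\{N+1,\ldots,2N\}$), or ($i-N\in\mathcal I_R$ and $j\in\{1,\ldots,N\}$), and $a_{ij}=0$ otherwise. Let $\Sigma_A\subset\{1,\ldots,2N\}^{\mathbb Z}$ be the set of $A$-admissible sequences (those $\omega$ with $a_{\omega_n\omega_{n+1}}=1$ for all $n$), $\sigma_A$ the shift on $\Sigma_A$, and $\sigma$ the shift on $\Sigma_N=\{1,\ldots,N\}^{\mathbb Z}$. Define $\pi\colon\Sigma_A\to\Sigma_N$ by $\pi(\omega)_n=\overline{\omega_n}$, where $\overline i=i$ for $i\le N$ and $\overline i=i-N$ for $i>N$. Then $\pi$ is a two-to-one semi-conjugation between $\sigma_A$ and $\sigma$: $\pi$ is continuous, surjective, $\pi\circ\sigma_A=\sigma\circ\pi$, and each point of $\Sigma_N$ has exactly two preimages under $\pi$. *)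

theory Defs
  imports "HOL-Analysis.Analysis"
begin

definition C1_on :: "real set \<Rightarrow> (real \<Rightarrow> real) \<Rightarrow> bool" where
  "C1_on S g \<longleftrightarrow> (\<exists>g'. continuous_on S g' \<and>
      (\<forall>x\<in>S. (g has_real_derivative g' x) (at x within S)))"

definition C1_diffeo_onto_image :: "(real \<Rightarrow> real) \<Rightarrow> bool" where
  "C1_diffeo_onto_image f \<longleftrightarrow>
     f ` {0..1} \<subseteq> {0..1} \<and> inj_on f {0..1} \<and> C1_on {0..1} f \<and>
     C1_on (f ` {0..1}) (the_inv_into {0..1} f)"

definition orient_pres :: "(real \<Rightarrow> real) \<Rightarrow> bool" where
  "orient_pres g \<longleftrightarrow> (\<forall>x\<in>{0..1}. \<forall>y\<in>{0..1}. x < y \<longrightarrow> g x < g y)"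

definition orient_rev :: "(real \<Rightarrow> real) \<Rightarrow> bool" where
  "orient_rev g \<longleftrightarrow> (\<forall>x\<in>{0..1}. \<forall>y\<in>{0..1}. x < y \<longrightarrow> g y < g x)"

definition I_P :: "nat \<Rightarrow> (nat \<Rightarrow> real \<Rightarrow> real) \<Rightarrow> nat set" where
  "I_P N f = {i\<in>{1..N}. orient_pres (f i)}"

definition I_R :: "nat \<Rightarrow> (nat \<Rightarrow> real \<Rightarrow> real) \<Rightarrow> nat set" where
  "I_R N f = {i\<in>{1..N}. orient_rev (f i)}"

text \<open>The 2N x 2N transition matrix (entries indexed by 1..2N).  Note that
  "i - N \<in> I_P" is only meaningful for i > N; we make this explicit.\<close>
definition trans_mat :: "nat \<Rightarrow> (nat \<Rightarrow> real \<Rightarrow> real) \<Rightarrow> nat \<Rightarrow> nat \<Rightarrow> nat" where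
  "trans_mat N f i j =
    (if i \<in> {1..2*N} \<and> j \<in> {1..2*N} \<and>
        ((i \<in> I_P N f \<and> j \<in> {1..N}) \<or>
         (i \<in> I_R N f \<and> j \<in> {N+1..2*N}) \<or>
         (i > N \<and> i - N \<in> I_P N f \<and> j \<in> {N+1..2*N}) \<or>
         (i > N \<and> i - N \<in> I_R N f \<and> j \<in> {1..N}))
     then 1 else 0)"

definition Sigma_A :: "nat \<Rightarrow> (nat \<Rightarrow> nat \<Rightarrow> nat) \<Rightarrow> (int \<Rightarrow> nat) set" where
  "Sigma_A N A = {\<omega>. (\<forall>n. \<omega> n \<in> {1..2*N}) \<and> (\<forall>n. A (\<omega> n) (\<omega> (n+1)) = 1)}"

definition Sigma_full :: "nat \<Rightarrow> (int \<Rightarrow> nat) set" where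
  "Sigma_full N = {\<omega>. \<forall>n. \<omega> n \<in> {1..N}}"

definition shift :: "(int \<Rightarrow> nat) \<Rightarrow> (int \<Rightarrow> nat)" where
  "shift \<omega> = (\<lambda>n. \<omega> (n+1))"

definition bar :: "nat \<Rightarrow> nat \<Rightarrow> nat" where
  "bar N i = (if i \<le> N then i else i - N)"

definition proj :: "nat \<Rightarrow> (int \<Rightarrow> nat) \<Rightarrow> (int \<Rightarrow> nat)" where
  "proj N \<omega> = (\<lambda>n. bar N (\<omega> n))"

end

theory Submission imports Defs begin

lemma C1_cont: "C1_on S g \<Longrightarrow> continuous_on S g"
  unfolding C1_on_def
  by (meson DERIV_continuous continuous_on_eq_continuous_within)

lemma mono_or_anti:
  assumes "C1_diffeo_onto_image g"
  shows "orient_pres g \<or> orient_rev g"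
proof -
  have c: "continuous_on {0..1} g" and inj: "inj_on g {0..1::real}"
    using assms C1_cont unfolding C1_diffeo_onto_image_def by auto
  have ne: "g 0 \<noteq> g 1" using inj by (auto dest: inj_onD)
  have mid: "\<And>z. 0 < z \<Longrightarrow> z < 1 \<Longrightarrow> (g 0 < g z \<and> g z < g 1) \<or> (g 1 < g z \<and> g z < g 0)"
    using continuous_inj_imp_mono[OF _ _ c inj] by blast
  have sub: "\<And>y. 0 < y \<Longrightarrow> y \<le> 1 \<Longrightarrow> continuous_on {0..y} g \<and> inj_on g {0..y}"
    using c inj by (meson atLeastatMost_subset_iff continuous_on_subset inj_on_subset order_refl zero_le_one)
  show ?thesis
  proof (cases "g 0 < g 1")
    case True
    have "orient_pres g" unfolding orient_pres_def
    proof (intro ballI impI)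
      fix x y :: real assume x: "x \<in> {0..1}" and y: "y \<in> {0..1}" and xy: "x < y"
      have gy: "g 0 < g y" using mid[of y] True xy x y by (cases "y = 1") auto
      show "g x < g y"
      proof (cases "x = 0")
        case True then show ?thesis using gy by simp
      next
        case False
        then have "0 < x" using x by auto
        then have "(g 0 < g x \<and> g x < g y) \<or> (g y < g x \<and> g x < g 0)"
          using continuous_inj_imp_mono[of 0 x y g] sub[of y] xy y by auto
        then show ?thesis using gy by auto
      qed
    qed
    then show ?thesis by simp
  next
    case False
    then have F: "g 1 < g 0" using ne by auto
    have "orient_rev g" unfolding orient_rev_def
    proof (intro ballI impI)
      fix x y :: real assume x: "x \<in> {0..1}" and y: "y \<in> {0..1}" and xy: "x < y"
      have gy: "g y < g 0" using mid[of y] F xy x y by (cases "y = 1") auto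
      show "g y < g x"
      proof (cases "x = 0")
        case True then show ?thesis using gy by simp
      next
        case False
        then have "0 < x" using x by auto
        then have "(g 0 < g x \<and> g x < g y) \<or> (g y < g x \<and> g x < g 0)"
          using continuous_inj_imp_mono[of 0 x y g] sub[of y] xy y by auto
        then show ?thesis using gy by auto
      qed
    qed
    then show ?thesis by simp
  qed
qed

lemma not_both: "\<not> (orient_pres g \<and> orient_rev g)"
  unfolding orient_pres_def orient_rev_def
  by (metis atLeastAtMost_iff le_numeral_extra(1) less_numeral_extra(1) order_less_asym order_refl zero_le_one)

lemma IP_IR_disj: "I_P N f \<inter> I_R N f = {}"
  using not_both unfolding I_P_def I_R_def by blast

lemma parity_seq: "\<exists>c::int\<Rightarrow>bool. \<forall>n. c (n+1) = (c n \<noteq> r n)"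
proof -
  define A where "A m = {k\<in>{0..<m}. r k}" for m :: int
  define B where "B m = {k\<in>{m..<0}. r k}" for m :: int
  define c where "c n = (odd (card (A n)) \<noteq> odd (card (B n)))" for n :: int
  have fA: "finite (A m)" and fB: "finite (B m)" for m unfolding A_def B_def by (rule finite_subset[of _ "{0..<m}"]; auto) (rule finite_subset[of _ "{m..<0}"]; auto)
  have "c (n+1) = (c n \<noteq> r n)" for n
  proof (cases "n \<ge> 0")
    case True
    have e: "A (n+1) = (if r n then insert n (A n) else A n)"
      using True unfolding A_def by (auto simp: le_less)
    have "n \<notin> A n" unfolding A_def by auto
    then have "card (A (n+1)) = card (A n) + (if r n then 1 else 0)"
      using e fA by simp
    moreover have "B (n+1) = {}" "B n = {}" using True unfolding B_def by auto
    ultimately show ?thesis unfolding c_def by auto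
  next
    case False
    have e: "B n = (if r n then insert n (B (n+1)) else B (n+1))"
      using False unfolding B_def by (auto simp: le_less)
    have "n \<notin> B (n+1)" unfolding B_def by auto
    then have "card (B n) = card (B (n+1)) + (if r n then 1 else 0)"
      using e fB by simp
    moreover have "A (n+1) = {}" "A n = {}" using False unfolding A_def by auto
    ultimately show ?thesis unfolding c_def by auto
  qed
  then show ?thesis by blast
qed


lemma IP_le: "i \<in> I_P N f \<Longrightarrow> 1 \<le> i \<and> i \<le> N" unfolding I_P_def by auto
lemma IR_le: "i \<in> I_R N f \<Longrightarrow> 1 \<le> i \<and> i \<le> N" unfolding I_R_def by auto

lemma tm_char:
  assumes "trans_mat N f i j = 1"
  shows "i \<in> {1..2*N} \<and> j \<in> {1..2*N} \<and>
    ((bar N i \<in> I_P N f \<and> (j \<le> N \<longleftrightarrow> i \<le> N)) \<or> (bar N i \<in> I_R N f \<and> (j \<le> N \<longleftrightarrow> \<not> i \<le> N)))"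
proof -
  have h: "i \<in> {1..2*N} \<and> j \<in> {1..2*N} \<and>
        ((i \<in> I_P N f \<and> j \<in> {1..N}) \<or>
         (i \<in> I_R N f \<and> j \<in> {N+1..2*N}) \<or>
         (i > N \<and> i - N \<in> I_P N f \<and> j \<in> {N+1..2*N}) \<or>
         (i > N \<and> i - N \<in> I_R N f \<and> j \<in> {1..N}))"
    using assms unfolding trans_mat_def by (metis zero_neq_one)
  show ?thesis
  proof (cases "i \<le> N")
    case True
    then have "bar N i = i" unfolding bar_def by simp
    then show ?thesis using h True IP_le[of "i - N" N f] IR_le[of "i - N" N f] by auto
  next
    case False
    then have "bar N i = i - N" unfolding bar_def by simp
    then show ?thesis using h False IP_le[of i N f] IR_le[of i N f] by auto
  qed
qed

lemma bar_inj: "j \<in> {1..2*N} \<Longrightarrow> j' \<in> {1..2*N} \<Longrightarrow> bar N j = bar N j' \<Longrightarrow> (j \<le> N \<longleftrightarrow> j' \<le> N) \<Longrightarrow> j = j'"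
  unfolding bar_def by (auto split: if_splits)

lemma tm_fwd:
  assumes "trans_mat N f i j = 1" "trans_mat N f i j' = 1" "bar N j = bar N j'"
  shows "j = j'"
proof -
  note a = tm_char[OF assms(1)] tm_char[OF assms(2)]
  have dj: "\<not> (bar N i \<in> I_P N f \<and> bar N i \<in> I_R N f)" using IP_IR_disj[of N f] by blast
  have "(j \<le> N \<longleftrightarrow> j' \<le> N)" using a(1)[THEN conjunct2, THEN conjunct2] a(2)[THEN conjunct2, THEN conjunct2] dj by argo
  then show ?thesis using a(1)[THEN conjunct2, THEN conjunct1] a(2)[THEN conjunct2, THEN conjunct1] assms(3) bar_inj by blast
qed

lemma tm_bwd:
  assumes "trans_mat N f i j = 1" "trans_mat N f i' j = 1" "bar N i = bar N i'"
  shows "i = i'"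
proof -
  note a = tm_char[OF assms(1)] tm_char[OF assms(2)]
  have dj: "\<not> (bar N i \<in> I_P N f \<and> bar N i \<in> I_R N f)" using IP_IR_disj[of N f] by blast
  have "(i \<le> N \<longleftrightarrow> i' \<le> N)" using a(1)[THEN conjunct2, THEN conjunct2] a(2)[THEN conjunct2, THEN conjunct2] dj assms(3) by argo
  then show ?thesis using a(1)[THEN conjunct1] a(2)[THEN conjunct1] assms(3) bar_inj by blast
qed

lemma uniq:
  assumes "\<omega> \<in> Sigma_A N (trans_mat N f)" "\<omega>' \<in> Sigma_A N (trans_mat N f)"
    "proj N \<omega> = proj N \<omega>'" "\<omega> 0 = \<omega>' 0"
  shows "\<omega> = \<omega>'"
proof
  fix n :: int
  have adm: "trans_mat N f (\<omega> m) (\<omega> (m+1)) = 1" "trans_mat N f (\<omega>' m) (\<omega>' (m+1)) = 1" for m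
    using assms(1,2) unfolding Sigma_A_def by auto
  have b: "bar N (\<omega> m) = bar N (\<omega>' m)" for m
    using assms(3) unfolding proj_def by metis
  show "\<omega> n = \<omega>' n"
  proof (cases "n \<ge> 0")
    case True
    then show ?thesis
    proof (induction n rule: int_ge_induct)
      case base then show ?case using assms(4) by simp
    next
      case (step m)
      then show ?case using tm_fwd[OF adm(1)[of m] _ b[of "m+1"]] adm(2)[of m] by simp
    qed
  next
    case False
    then have "n \<le> 0" by simp
    then show ?thesis
    proof (induction n rule: int_le_induct)
      case base then show ?case using assms(4) by simp
    next
      case (step m)
      then show ?case using tm_bwd[OF adm(1)[of "m-1"] _ b[of "m-1"]] adm(2)[of "m-1"] by simp
    qed
  qed
qed

lemma exist:
  assumes "\<forall>i\<in>{1..N}. C1_diffeo_onto_image (f i)" "x \<in> Sigma_full N"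
  shows "\<exists>\<omega>\<in>Sigma_A N (trans_mat N f). proj N \<omega> = x \<and> (N < \<omega> 0) = b"
proof -
  obtain c where c: "\<And>n. c (n+1) = (c n \<noteq> (x n \<in> I_R N f))"
    using parity_seq[of "\<lambda>n. x n \<in> I_R N f"] by blast
  define \<omega> where "\<omega> n = (if (b \<noteq> c 0) \<noteq> c n then x n + N else x n)" for n
  have xr: "x n \<in> {1..N}" for n using assms(2) unfolding Sigma_full_def by auto
  have PR: "x n \<in> I_P N f \<or> x n \<in> I_R N f" for n
    using xr[of n] assms(1) mono_or_anti unfolding I_P_def I_R_def by blast
  have dj: "\<not> (x n \<in> I_P N f \<and> x n \<in> I_R N f)" for n using IP_IR_disj[of N f] by blast
  have "trans_mat N f (\<omega> n) (\<omega> (n+1)) = 1" for n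
    using PR[of n] dj[of n] xr[of n] xr[of "n+1"] c[of n] unfolding \<omega>_def trans_mat_def
    by (auto simp: I_P_def I_R_def)
  moreover have "\<omega> n \<in> {1..2*N}" for n using xr[of n] unfolding \<omega>_def by auto
  moreover have "proj N \<omega> = x"
  proof (rule ext)
    fix n show "proj N \<omega> n = x n" using xr[of n] unfolding proj_def bar_def \<omega>_def by auto
  qed
  moreover have "(N < \<omega> 0) = b" using xr[of 0] unfolding \<omega>_def by auto
  ultimately show ?thesis unfolding Sigma_A_def by blast
qed


theorem lemma3p2:
  fixes N :: nat and f :: "nat \<Rightarrow> real \<Rightarrow> real"
  assumes "\<forall>i\<in>{1..N}. C1_diffeo_onto_image (f i)"
  defines "SA \<equiv> Sigma_A N (trans_mat N f)"
  shows "continuous_on SA (proj N) \<and>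
         proj N ` SA = Sigma_full N \<and>
         shift ` SA \<subseteq> SA \<and>
         (\<forall>\<omega>\<in>SA. proj N (shift \<omega>) = shift (proj N \<omega>)) \<and>
         (\<forall>x\<in>Sigma_full N. card {\<omega>\<in>SA. proj N \<omega> = x} = 2)"
proof (intro conjI)
  have "continuous_on UNIV (proj N)"
    unfolding proj_def
  proof (rule continuous_on_coordinatewise_then_product)
    fix n :: int
    show "continuous_on UNIV (\<lambda>\<omega>::int\<Rightarrow>nat. bar N (\<omega> n))"
      using continuous_on_compose[OF continuous_on_product_coordinates[of n] Topological_Spaces.continuous_on_discrete[of _ "bar N"]]
      by (simp add: o_def)
  qed
  then show "continuous_on SA (proj N)" by (rule continuous_on_subset) simp
next
  have "proj N ` SA \<subseteq> Sigma_full N"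
  proof
    fix y assume "y \<in> proj N ` SA"
    then obtain \<omega> where o: "\<omega> \<in> SA" "y = proj N \<omega>" by blast
    have "y n \<in> {1..N}" for n
    proof -
      have "\<omega> n \<in> {1..2*N}" using o(1) unfolding SA_def Sigma_A_def by blast
      then show ?thesis unfolding o(2) proj_def bar_def by auto
    qed
    then show "y \<in> Sigma_full N" unfolding Sigma_full_def by blast
  qed
  moreover have "Sigma_full N \<subseteq> proj N ` SA"
  proof
    fix x assume x: "x \<in> Sigma_full N"
    obtain w where "w \<in> SA" "proj N w = x"
      using exist[OF assms(1) x, of True] unfolding SA_def by blast
    then show "x \<in> proj N ` SA" by blast
  qed
  ultimately show "proj N ` SA = Sigma_full N" by blast
next
  show "shift ` SA \<subseteq> SA"
  proof
    fix y assume "y \<in> shift ` SA"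
    then obtain \<omega> where o: "\<omega> \<in> SA" "y = shift \<omega>" by blast
    have "\<forall>n. \<omega> n \<in> {1..2*N}" "\<forall>n. trans_mat N f (\<omega> n) (\<omega> (n+1)) = 1"
      using o(1) unfolding SA_def Sigma_A_def by blast+
    then have "\<forall>n. y n \<in> {1..2*N}" "\<forall>n. trans_mat N f (y n) (y (n+1)) = 1"
      unfolding o(2) shift_def by (simp, metis add.assoc)
    then show "y \<in> SA" unfolding SA_def Sigma_A_def by blast
  qed
next
  show "\<forall>\<omega>\<in>SA. proj N (shift \<omega>) = shift (proj N \<omega>)"
    unfolding proj_def shift_def by simp
next
  show "\<forall>x\<in>Sigma_full N. card {\<omega>\<in>SA. proj N \<omega> = x} = 2"
  proof
    fix x assume x: "x \<in> Sigma_full N"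
    obtain w1 where w1: "w1 \<in> SA" "proj N w1 = x" "N < w1 0"
      using exist[OF assms(1) x, of True] unfolding SA_def by blast
    obtain w2 where w2: "w2 \<in> SA" "proj N w2 = x" "\<not> N < w2 0"
      using exist[OF assms(1) x, of False] unfolding SA_def by blast
    have "{\<omega>\<in>SA. proj N \<omega> = x} = {w1, w2}"
    proof
      show "{w1, w2} \<subseteq> {\<omega>\<in>SA. proj N \<omega> = x}" using w1 w2 by auto
      show "{\<omega>\<in>SA. proj N \<omega> = x} \<subseteq> {w1, w2}"
      proof
        fix \<omega> assume "\<omega> \<in> {\<omega>\<in>SA. proj N \<omega> = x}"
        then have o: "\<omega> \<in> SA" "proj N \<omega> = x" by auto
        have b: "bar N (\<omega> 0) = bar N (w1 0)" "bar N (\<omega> 0) = bar N (w2 0)"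
          using o(2) w1(2) w2(2) unfolding proj_def by metis+
        have r: "\<omega> 0 \<in> {1..2*N}" "w1 0 \<in> {1..2*N}" "w2 0 \<in> {1..2*N}"
          using o(1) w1(1) w2(1) unfolding SA_def Sigma_A_def by blast+
        show "\<omega> \<in> {w1, w2}"
        proof (cases "N < \<omega> 0")
          case True
          then have "\<omega> 0 = w1 0" using bar_inj[OF r(1) r(2) b(1)] w1(3) by simp
          then have "\<omega> = w1" using uniq[of \<omega> N f w1] o w1 unfolding SA_def by simp
          then show ?thesis by simp
        next
          case False
          then have "\<omega> 0 = w2 0" using bar_inj[OF r(1) r(3) b(2)] w2(3) by simp
          then have "\<omega> = w2" using uniq[of \<omega> N f w2] o w2 unfolding SA_def by simp
          then show ?thesis by simp
        qed
      qed
    qed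
    moreover have "w1 \<noteq> w2" using w1(3) w2(3) by auto
    ultimately show "card {\<omega>\<in>SA. proj N \<omega> = x} = 2" by simp
  qed
qed

end
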